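(* Let $S=\{e_1,\dots,e_k\}\subseteq\mathbb{N}$ be a set of $k\geq1$ distinct elements with $e_k=\max(S)$, and let $b\geq 1$. Then $$\int_{1-\frac1b}^{1}\sqrt{\mathcal{I}(g_S)(t)}\,\mathrm{d}t\leq\frac{2(k+1)e_k}{b}.$$
   Context: $\mathbb{N}=\{0,1,2,\dots\}$. Define $g_S(t)=\sum_{e\in S}t^{2e}$. For a positive twice differentiable function $g$ on an interval contained in $(0,\infty)$, define $\mathcal{I}(g)(t):=(\log g)''(t)+\frac{(\log g)'(t)}{t}$ (this is nonnegative for $g=g_S$). *)

theory Defs
  imports "HOL-Analysis.Analysis"
begin

definition gS :: "nat set \<Rightarrow> real \<Rightarrow> real" where
  "gS S t = (\<Sum>e\<in>S. t ^ (2 * e))"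

definition calI :: "(real \<Rightarrow> real) \<Rightarrow> real \<Rightarrow> real" where
  "calI g t = deriv (deriv (\<lambda>s. ln (g s))) t + deriv (\<lambda>s. ln (g s)) t / t"

end

theory Submission
  imports Defs
begin

definition AA :: "nat set \<Rightarrow> nat \<Rightarrow> real \<Rightarrow> real" where
  "AA S j s = (\<Sum>e\<in>S. real e ^ j * s ^ (2 * e))"

lemma gS_AA: "gS S = AA S 0"
  by (rule ext) (simp add: gS_def AA_def)

lemma AA_pos: assumes "finite S" "S \<noteq> {}" "s > 0" shows "AA S 0 s > 0"
  unfolding AA_def using assms by (intro sum_pos) auto

lemma AA_deriv:
  assumes "s > 0"
  shows "(AA S j has_field_derivative 2 * AA S (Suc j) s / s) (at s)"
proof -
  have "(AA S j has_field_derivative (\<Sum>e\<in>S. real e ^ j * (real (2*e) * s ^ (2*e - Suc 0)))) (at s)"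
    unfolding AA_def[abs_def] by (intro DERIV_sum DERIV_cmult DERIV_pow)
  moreover have "(\<Sum>e\<in>S. real e ^ j * (real (2*e) * s ^ (2*e - Suc 0))) = 2 * AA S (Suc j) s / s"
    unfolding AA_def sum_divide_distrib sum_distrib_left
  proof (rule sum.cong[OF refl])
    fix e assume "e \<in> S"
    show "real e ^ j * (real (2*e) * s ^ (2*e - Suc 0)) = 2 * (real e ^ Suc j * s ^ (2 * e)) / s"
    proof (cases "e = 0")
      case False
      then have "2*e = Suc (2*e - Suc 0)" by simp
      then have "s ^ (2*e) = s * s ^ (2*e - Suc 0)"
        by (metis power_Suc)
      then show ?thesis using assms by simp
    qed simp
  qed
  ultimately show ?thesis by simp
qed

lemma alg_ident:
  fixes a0 a1 a2 t :: real
  assumes "t > 0" "a0 > 0"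
  shows "(2 * (2 * a2 / t) * (t * a0) - 2 * a1 * (a0 + t * (2 * a1 / t))) / ((t * a0) * (t * a0))
     + 2 * a1 / (t * a0) / t = 4 * (a2 * a0 - a1^2) / (t^2 * a0^2)"
  using assms by (simp add: field_split_simps power2_eq_square)

lemma calI_formula:
  assumes S: "finite S" "S \<noteq> {}" and t: "t > 0"
  shows "calI (gS S) t = 4 * (AA S 2 t * AA S 0 t - (AA S 1 t)^2) / (t^2 * (AA S 0 t)^2)"
proof -
  define D where "D s = 2 * AA S 1 s / (s * AA S 0 s)" for s
  have dln: "deriv (\<lambda>s. ln (gS S s)) s = D s" if "s > 0" for s
  proof (rule DERIV_imp_deriv)
    have "((\<lambda>s. ln (AA S 0 s)) has_field_derivative 1 / AA S 0 s * (2 * AA S (Suc 0) s / s)) (at s)"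
      by (rule DERIV_chain2[OF DERIV_ln_divide[OF AA_pos[OF S that]] AA_deriv[OF that]])
    moreover have "1 / AA S 0 s * (2 * AA S (Suc 0) s / s) = D s"
      unfolding D_def by simp
    ultimately show "((\<lambda>s. ln (gS S s)) has_field_derivative D s) (at s)"
      unfolding gS_AA by simp
  qed
  have num: "((\<lambda>s. 2 * AA S 1 s) has_field_derivative 2 * (2 * AA S 2 t / t)) (at t)"
    using DERIV_cmult[OF AA_deriv[OF t, of S 1], of 2] by (simp add: numeral_2_eq_2)
  have den: "((\<lambda>s. s * AA S 0 s) has_field_derivative (1 * AA S 0 t + t * (2 * AA S 1 t / t))) (at t)"
    using DERIV_mult[OF DERIV_ident AA_deriv[OF t, of S 0]] by simp
  have "(D has_field_derivative
     ((2 * (2 * AA S 2 t / t) * (t * AA S 0 t) - 2 * AA S 1 t * (1 * AA S 0 t + t * (2 * AA S 1 t / t))) / ((t * AA S 0 t) * (t * AA S 0 t)))) (at t)"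
    unfolding D_def[abs_def]
    by (rule DERIV_divide[OF num den]) (use AA_pos[OF S t] t in simp)
  then have "(deriv (\<lambda>s. ln (gS S s)) has_field_derivative
     ((2 * (2 * AA S 2 t / t) * (t * AA S 0 t) - 2 * AA S 1 t * (1 * AA S 0 t + t * (2 * AA S 1 t / t))) / ((t * AA S 0 t) * (t * AA S 0 t)))) (at t)"
    by (rule has_field_derivative_transform_within_open[where S="{0<..}"]) (use t dln in auto)
  then have "deriv (deriv (\<lambda>s. ln (gS S s))) t =
     ((2 * (2 * AA S 2 t / t) * (t * AA S 0 t) - 2 * AA S 1 t * (1 * AA S 0 t + t * (2 * AA S 1 t / t))) / ((t * AA S 0 t) * (t * AA S 0 t)))"
    by (rule DERIV_imp_deriv)
  then show ?thesis
    unfolding calI_def using dln[OF t] alg_ident[of t "AA S 0 t" "AA S 2 t" "AA S 1 t", OF t AA_pos[OF S t]]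
    by (simp add: D_def)
qed

lemma sq_expand:
  fixes w x :: "nat \<Rightarrow> real"
  shows "(\<Sum>e\<in>S. w e * (x e * c - d)^2) =
    (\<Sum>e\<in>S. w e * x e ^ 2) * c^2 - (\<Sum>e\<in>S. w e * x e) * (2*c*d) + (\<Sum>e\<in>S. w e) * d^2"
proof -
  have "(\<Sum>e\<in>S. w e * (x e * c - d)^2) = (\<Sum>e\<in>S. (w e * x e^2) * c^2 - (w e * x e) * (2*c*d) + w e * d^2)"
    by (rule sum.cong) (simp_all add: power2_eq_square algebra_simps)
  also have "\<dots> = (\<Sum>e\<in>S. w e * x e ^ 2) * c^2 - (\<Sum>e\<in>S. w e * x e) * (2*c*d) + (\<Sum>e\<in>S. w e) * d^2"
    by (simp add: sum.distrib sum_subtractf sum_distrib_right)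
  finally show ?thesis .
qed

lemma AA_expand:
  "(\<Sum>e\<in>S. t^(2*e) * (real e * c - d)^2) = AA S 2 t * c^2 - AA S 1 t * (2*c*d) + AA S 0 t * d^2"
  unfolding sq_expand AA_def by (simp add: mult.commute)

lemma var_nonneg:
  assumes S: "finite S" "S \<noteq> {}" and t: "t > 0"
  shows "(AA S 1 t)^2 \<le> AA S 2 t * AA S 0 t"
proof -
  have "0 \<le> (\<Sum>e\<in>S. t^(2*e) * (real e * AA S 0 t - AA S 1 t)^2)"
    by (intro sum_nonneg) simp
  also have "\<dots> = AA S 0 t * (AA S 2 t * AA S 0 t - (AA S 1 t)^2)"
    unfolding AA_expand by (simp add: power2_eq_square algebra_simps)
  finally show ?thesis using AA_pos[OF S t] by (simp add: zero_le_mult_iff)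
qed

lemma sumsq_le_sqsum:
  fixes x :: "nat \<Rightarrow> real"
  assumes "finite S" "\<And>e. e \<in> S \<Longrightarrow> x e \<ge> 0"
  shows "(\<Sum>e\<in>S. (x e)^2) \<le> (\<Sum>e\<in>S. x e)^2"
  using assms
proof (induction S rule: finite_induct)
  case (insert a F)
  have "0 \<le> x a" "0 \<le> (\<Sum>e\<in>F. x e)" using insert.prems by (auto intro: sum_nonneg)
  then have "0 \<le> 2 * x a * (\<Sum>e\<in>F. x e)" by simp
  with insert show ?case by (simp add: power2_eq_square algebra_simps)
qed simp

definition hh :: "nat set \<Rightarrow> real \<Rightarrow> real" where
  "hh S t = (\<Sum>e\<in>S. 2 * (real (e - Min S) * t ^ (e - Min S - Suc 0)))"

lemma calI_bound:
  assumes S: "finite S" "S \<noteq> {}" and t: "t > 0"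
  shows "calI (gS S) t \<le> (hh S t)^2"
proof -
  define m where "m = Min S"
  have mS: "m \<in> S" and mle: "\<And>e. e \<in> S \<Longrightarrow> m \<le> e" using S by (auto simp: m_def)
  define A0 A1 A2 where "A0 = AA S 0 t" and "A1 = AA S 1 t" and "A2 = AA S 2 t"
  have A0: "A0 > 0" using AA_pos[OF S t] by (simp add: A0_def)
  define B where "B = (\<Sum>e\<in>S. t^(2*e) * (real e * 1 - real m)^2)"
  have Bexp: "B = A2 - A1 * (2 * real m) + A0 * (real m)^2"
    unfolding B_def AA_expand A0_def A1_def A2_def by simp
  have a: "A2 * A0 - A1^2 \<le> A0 * B"
  proof -
    have "A0 * B - (A2 * A0 - A1^2) = (A1 - real m * A0)^2"
      unfolding Bexp by (simp add: power2_eq_square algebra_simps)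
    then show ?thesis by (metis diff_ge_0_iff_ge zero_le_power2)
  qed
  have ci: "calI (gS S) t = 4 * (A2 * A0 - A1^2) / (t^2 * A0^2)"
    using calI_formula[OF S t] by (simp add: A0_def A1_def A2_def)
  have b: "calI (gS S) t \<le> 4 * B / (t^2 * A0)"
  proof -
    have "calI (gS S) t \<le> 4 * (A0 * B) / (t^2 * A0^2)"
      unfolding ci using a t A0 by (intro divide_right_mono) auto
    also have "\<dots> = 4 * B / (t^2 * A0)" using A0 by (simp add: power2_eq_square)
    finally show ?thesis .
  qed
  define C where "C = (\<Sum>e\<in>S. (real (e - m) * t^(e - m))^2)"
  have c: "B = t^(2*m) * C"
    unfolding B_def C_def sum_distrib_left
  proof (rule sum.cong[OF refl])
    fix e assume e: "e \<in> S"
    have "t^(2*e) = t^(2*m) * (t^(e-m))^2"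
    proof -
      have "2*e = 2*m + (e-m)*2" using mle[OF e] by simp
      then have "t^(2*e) = t^(2*m + (e-m)*2)" by simp
      also have "\<dots> = t^(2*m) * (t^(e-m))^2" by (simp only: power_add power_mult)
      finally show ?thesis .
    qed
    moreover have "real e * 1 - real m = real (e - m)" using mle[OF e] by (simp add: of_nat_diff)
    ultimately show "t^(2*e) * (real e * 1 - real m)^2 = t^(2*m) * (real (e - m) * t^(e - m))^2"
      by (simp only: power_mult_distrib mult_ac)
  qed
  have d: "t^(2*m) \<le> A0"
  proof -
    have "t^(2*m) = t^(2*m) * real m ^ 0" by simp
    also have "\<dots> \<le> A0" unfolding A0_def AA_def
      using member_le_sum[of m S "\<lambda>e. real e ^ 0 * t ^ (2 * e)"] mS S t by (simp add: mult.commute)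
    finally show ?thesis .
  qed
  have Cnn: "C \<ge> 0" unfolding C_def by (intro sum_nonneg) simp
  have e: "B / A0 \<le> C"
  proof -
    have "B \<le> A0 * C" unfolding c using d Cnn by (intro mult_right_mono) auto
    then show ?thesis using A0 by (simp add: divide_le_eq mult.commute)
  qed
  define P where "P = (\<Sum>e\<in>S. real (e - m) * t ^ (e - m - Suc 0))"
  have g: "(\<Sum>e\<in>S. real (e - m) * t^(e - m)) = t * P"
    unfolding P_def sum_distrib_left
  proof (rule sum.cong[OF refl])
    fix e assume "e \<in> S"
    show "real (e - m) * t^(e - m) = t * (real (e - m) * t ^ (e - m - Suc 0))"
    proof (cases "e - m = 0")
      case False
      then have "e - m = Suc (e - m - Suc 0)" by simp
      then have "t^(e-m) = t * t^(e - m - Suc 0)" by (metis power_Suc)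
      then show ?thesis by simp
    qed simp
  qed
  have f: "C \<le> (t * P)^2"
    unfolding C_def g[symmetric] using S t by (intro sumsq_le_sqsum) auto
  have "4 * B / (t^2 * A0) = 4 * (B / A0) / t^2" by simp
  with b have "calI (gS S) t \<le> 4 * (B / A0) / t^2" by simp
  also have "\<dots> \<le> 4 * ((t * P)^2) / t^2"
    using e f t by (intro divide_right_mono mult_left_mono) auto
  also have "\<dots> = (2 * P)^2" using t by (simp add: power_mult_distrib)
  also have "2 * P = hh S t" unfolding hh_def P_def m_def sum_distrib_left by simp
  finally show ?thesis .
qed

lemma AA_cont: "continuous_on X (AA S j)"
  unfolding AA_def[abs_def] by (intro continuous_intros)

lemma hh_nonneg: "t \<ge> 0 \<Longrightarrow> hh S t \<ge> 0"
  unfolding hh_def by (intro sum_nonneg) simp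

lemma f_bounds:
  assumes S: "finite S" "S \<noteq> {}" and t: "t > 0"
  shows "0 \<le> sqrt (calI (gS S) t) \<and> sqrt (calI (gS S) t) \<le> hh S t"
proof -
  have "0 \<le> calI (gS S) t"
    unfolding calI_formula[OF S t] using var_nonneg[OF S t] by simp
  moreover have "sqrt (calI (gS S) t) \<le> sqrt ((hh S t)^2)"
    using calI_bound[OF S t] by (rule real_sqrt_le_mono)
  ultimately show ?thesis using hh_nonneg[of t S] t by simp
qed

lemma H_deriv:
  "((\<lambda>t. \<Sum>e\<in>S. 2 * t ^ (e - Min S)) has_field_derivative hh S x) (at x)"
  unfolding hh_def by (intro DERIV_sum DERIV_cmult DERIV_pow)

theorem lemma6p1:
  fixes S :: "nat set" and b :: real
  assumes "finite S" and "S \<noteq> {}" and "b \<ge> 1"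
  shows "(\<lambda>t. sqrt (calI (gS S) t)) integrable_on {1 - 1/b..1}
    \<and> integral {1 - 1/b..1} (\<lambda>t. sqrt (calI (gS S) t))
        \<le> 2 * (real (card S) + 1) * real (Max S) / b"
proof -
  note S = assms(1,2)
  define a where "a = 1 - 1/b"
  have b0: "b > 0" using assms(3) by simp
  have a0: "0 \<le> a" "a < 1" using assms(3) b0 by (auto simp: a_def field_simps)
  define f where "f = (\<lambda>t. sqrt (calI (gS S) t))"
  define T where "T = {a..1} - {0::real}"
  have Tpos: "t \<in> T \<Longrightarrow> t > 0" for t using a0 by (auto simp: T_def)
  have fT: "\<And>t. t \<in> T \<Longrightarrow> 0 \<le> f t \<and> f t \<le> hh S t"
    unfolding f_def using f_bounds[OF S] Tpos by blast
  have hcont: "continuous_on {a..1} (hh S)" unfolding hh_def by (intro continuous_intros)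
  have hint: "hh S integrable_on {a..1}" by (rule integrable_continuous_interval[OF hcont])
  have neg1: "negligible {x \<in> {a..1} - T. g x \<noteq> 0}" for g :: "real \<Rightarrow> real"
    by (rule negligible_subset[of "{0}"]) (auto simp: T_def)
  have neg2: "negligible {x \<in> T - {a..1}. g x \<noteq> 0}" for g :: "real \<Rightarrow> real"
    by (rule negligible_subset[of "{}"]) (auto simp: T_def)
  have neg1': "negligible {x \<in> T - {a..1}. g x \<noteq> 0}" for g :: "real \<Rightarrow> real"
    by (rule neg2)
  have hintT: "hh S integrable_on T" by (rule integrable_spike_set[OF hint neg1 neg2])
  have fcont: "continuous_on T f"
  proof -
    have nz: "\<And>x. x \<in> T \<Longrightarrow> AA S 0 x \<noteq> 0 \<and> x \<noteq> 0"
      using Tpos AA_pos[OF S] by (metis less_irrefl)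
    have "continuous_on T (\<lambda>t. sqrt (4 * (AA S 2 t * AA S 0 t - (AA S 1 t)^2) / (t^2 * (AA S 0 t)^2)))"
      using nz by (intro continuous_intros AA_cont) auto
    then show ?thesis
      by (rule continuous_on_cong[THEN iffD1, rotated 2]) (auto simp: f_def calI_formula[OF S] Tpos)
  qed
  have Tleb: "T \<in> sets lebesgue" unfolding T_def by (intro sets.Diff) auto
  have fmeas: "f \<in> borel_measurable (lebesgue_on T)"
    by (rule continuous_imp_measurable_on_sets_lebesgue[OF fcont Tleb])
  have fintT: "f integrable_on T"
    by (rule measurable_bounded_by_integrable_imp_integrable_real[OF fmeas hintT _ Tleb])
       (use fT in auto)
  have fint: "f integrable_on {a..1}"
    by (rule integrable_spike_set[OF fintT]) (use neg1 neg2 in auto)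
  define H where "H t = (\<Sum>e\<in>S. 2 * t ^ (e - Min S))" for t :: real
  have Hint: "(hh S has_integral (H 1 - H a)) {a..1}"
  proof (rule fundamental_theorem_of_calculus)
    show "a \<le> 1" using a0 by simp
    fix x :: real
    show "(H has_vector_derivative hh S x) (at x within {a..1})"
      unfolding H_def[abs_def] has_real_derivative_iff_has_vector_derivative[symmetric]
      by (rule has_field_derivative_at_within[OF H_deriv])
  qed
  have "integral {a..1} f = integral T f"
    by (rule integral_spike_set) (use neg1 neg2 in auto)
  also have "\<dots> \<le> integral T (hh S)"
    by (rule integral_le[OF fintT hintT]) (use fT in auto)
  also have "\<dots> = integral {a..1} (hh S)"
    by (rule integral_spike_set) (use neg1 neg2 in auto)
  also have "\<dots> = H 1 - H a" using Hint by (rule integral_unique)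
  also have "\<dots> = (\<Sum>e\<in>S. 2 * (1 - a ^ (e - Min S)))"
    unfolding H_def sum_subtractf[symmetric] by (simp add: right_diff_distrib)
  also have "\<dots> \<le> (\<Sum>e\<in>S. 2 * (real (Max S) / b))"
  proof (rule sum_mono)
    fix e assume e: "e \<in> S"
    have "1 + real (e - Min S) * (- 1 / b) \<le> (1 + - 1 / b) ^ (e - Min S)"
      by (rule Bernoulli_inequality) (use assms(3) in \<open>simp add: field_simps\<close>)
    then have "1 - a ^ (e - Min S) \<le> real (e - Min S) / b" by (simp add: a_def)
    also have "\<dots> \<le> real (Max S) / b"
    proof -
      have "e - Min S \<le> Max S" using Max_ge[OF S(1) e] by simp
      then have "real (e - Min S) \<le> real (Max S)" by (simp only: of_nat_le_iff)
      then show ?thesis using b0 by (intro divide_right_mono) auto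
    qed
    finally show "2 * (1 - a ^ (e - Min S)) \<le> 2 * (real (Max S) / b)" by simp
  qed
  also have "\<dots> = real (card S) * (2 * real (Max S) / b)" by simp
  also have "\<dots> \<le> 2 * (real (card S) + 1) * real (Max S) / b"
    using b0 by (simp add: field_simps)
  finally show ?thesis using fint by (simp add: f_def a_def)
qed

end
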